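(* Let $\mathcal{I}$ and $\mathcal{J}$ be isomorphic sharp interval systems. For every hypergraph isomorphism $\psi$ from $\mathcal{I}$ to $\mathcal{J}$ there is a hypergraph isomorphism $\psi'$ from $\mathcal{I}$ to $\mathcal{J}$ such that $\psi'(A)=\psi(A)$ for all $A\in\mathcal{I}$ and, moreover, $\psi'$ maps the two extreme points of each interval $A\in\mathcal{I}$ onto the two extreme points of the interval $\psi(A)\in\mathcal{J}$.
   Context: An interval system is a hypergraph whose vertex set is $\{1,\dots,N\}$ and whose hyperedges are intervals of consecutive integers $[a,b]=\{a,a+1,\dots,b\}$; the extreme points of $[a,b]$ are $a$ and $b$. An interval system with $m$ intervals is sharp if $N=2m$ and the $2m$ extreme points of its intervals are pairwise distinct (so every point is the start or the end point of exactly one interval). A hypergraph isomorphism from $\mathcal{I}$ to $\mathcal{J}$ is a bijection between their vertex sets mapping the set of hyperedges of $\mathcal{I}$ onto that of $\mathcal{J}$. *)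

theory Defs
  imports Main
begin

definition interval_system :: "nat \<Rightarrow> nat set set \<Rightarrow> bool" where
  "interval_system N E \<longleftrightarrow> finite E \<and>
     (\<forall>A\<in>E. \<exists>a b. 1 \<le> a \<and> a \<le> b \<and> b \<le> N \<and> A = {a..b})"

definition extremes :: "nat set \<Rightarrow> nat set" where
  "extremes A = {Min A, Max A}"

definition sharp :: "nat \<Rightarrow> nat set set \<Rightarrow> bool" where
  "sharp N E \<longleftrightarrow> interval_system N E \<and> N = 2 * card E \<and>
     (\<forall>A\<in>E. Min A \<noteq> Max A) \<and>
     (\<forall>A\<in>E. \<forall>B\<in>E. A \<noteq> B \<longrightarrow> extremes A \<inter> extremes B = {})"

definition hyp_iso :: "(nat \<Rightarrow> nat) \<Rightarrow> nat set \<Rightarrow> nat set set \<Rightarrow> nat set \<Rightarrow> nat set set \<Rightarrow> bool" where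
  "hyp_iso f V E V' E' \<longleftrightarrow> bij_betw f V V' \<and> (\<lambda>A. f ` A) ` E = E'"

end

theory Submission
  imports Defs
begin

lemma MinMax_ival[simp]:
  fixes a b :: nat assumes "a \<le> b" shows "Min {a..b} = a" "Max {a..b} = b"
  using assms by (auto intro!: Min_eqI Max_eqI)

lemma sharp_int:
  assumes "sharp N I" "A \<in> I"
  obtains a b where "1 \<le> a" "a < b" "b \<le> N" "A = {a..b}"
proof -
  have "interval_system N I" using assms(1) unfolding sharp_def by (rule conjunct1)
  then have "\<forall>A\<in>I. \<exists>a b. 1 \<le> a \<and> a \<le> b \<and> b \<le> N \<and> A = {a..b}"
    unfolding interval_system_def by (rule conjunct2)
  then obtain a b where ab: "1 \<le> a" "a \<le> b" "b \<le> N" "A = {a..b}"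
    using assms(2) by metis
  have "\<forall>A\<in>I. Min A \<noteq> Max A" using assms(1) unfolding sharp_def by metis
  then have "Min A \<noteq> Max A" using assms(2) by metis
  then have "a \<noteq> b" using ab by simp
  then have "a < b" using ab(2) by linarith
  with ab that show thesis by blast
qed

lemma sharp_ext_sub:
  assumes "sharp N I" "A \<in> I" shows "extremes A \<subseteq> A" "A \<subseteq> {1..N}" "card (extremes A) = 2"
    "Min A \<in> A" "Max A \<in> A" "Min A < Max A"
proof -
  obtain a b where ab: "1 \<le> a" "a < b" "b \<le> N" "A = {a..b}" using sharp_int[OF assms] by blast
  have mm: "Min A = a" "Max A = b" using ab by simp_all
  show "extremes A \<subseteq> A" "card (extremes A) = 2" "Min A \<in> A" "Max A \<in> A" "Min A < Max A"
    unfolding extremes_def mm using ab by simp_all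
  show "A \<subseteq> {1..N}" using ab by simp
qed

lemma sharp_cover:
  assumes "sharp N I" shows "(\<Union>A\<in>I. extremes A) = {1..N}"
proof (rule card_subset_eq)
  show "(\<Union>A\<in>I. extremes A) \<subseteq> {1..N}" using sharp_ext_sub[OF assms] by blast
  have fin: "finite I" using assms unfolding sharp_def interval_system_def by blast
  have "card (\<Union>A\<in>I. extremes A) = (\<Sum>A\<in>I. card (extremes A))"
    apply (rule card_UN_disjoint[OF fin])
    using assms unfolding sharp_def apply (auto simp: extremes_def)
    done
  also have "\<dots> = (\<Sum>A\<in>I. 2)" using sharp_ext_sub[OF assms] by simp
  also have "\<dots> = N" using assms unfolding sharp_def by simp
  finally show "card (\<Union>A\<in>I. extremes A) = card {1..N}" by simp
qed simp

lemma sharp_unique: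
  assumes "sharp N I" "F \<in> I" "G \<in> I" "x \<in> extremes F" "x \<in> extremes G" shows "F = G"
  using assms unfolding sharp_def by blast

lemma sharp_nested:
  assumes "sharp N I" "F \<in> I" "B \<in> I" "B \<subseteq> F" "B \<noteq> F" "u \<in> extremes F"
  shows "u \<notin> B"
proof
  assume u: "u \<in> B"
  obtain a b where F: "a < b" "F = {a..b}" using sharp_int[OF assms(1,2)] by blast
  obtain c d where B: "c < d" "B = {c..d}" using sharp_int[OF assms(1,3)] by blast
  from assms(4) F B have "a \<le> c" "d \<le> b" by auto
  from assms(6) F have "u = a \<or> u = b" by (auto simp: extremes_def)
  then have "u \<in> extremes B" using u F B \<open>a \<le> c\<close> \<open>d \<le> b\<close> by (auto simp: extremes_def)
  with sharp_unique[OF assms(1,2,3) assms(6)] assms(5) show False by blast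
qed

lemma cross:
  assumes "sharp N I" "F \<in> I" "B \<in> I" "\<not> F \<subseteq> B" "\<not> B \<subseteq> F" "F \<inter> B \<noteq> {}"
  shows "(Min F \<in> B) \<noteq> (Max F \<in> B)"
proof -
  obtain a b where F: "a < b" "F = {a..b}" using sharp_int[OF assms(1,2)] by blast
  obtain c d where B: "c < d" "B = {c..d}" using sharp_int[OF assms(1,3)] by blast
  show ?thesis using assms(4-6) F B by auto
qed

lemma posit_ar:
  fixes a b c d p q :: nat
  assumes "a < b" "c < d" "a \<le> p" "p < q" "q \<le> b"
  and h1: "\<not>(c\<le>a \<and> b\<le>d) \<Longrightarrow> \<not>(a\<le>c \<and> d\<le>b) \<Longrightarrow> c \<le> b \<and> a \<le> d \<Longrightarrow> (c\<le>p\<and>p\<le>d) \<noteq> (c\<le>q\<and>q\<le>d)"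
  and h2: "c\<le>a \<and> b\<le>d \<Longrightarrow> c\<le>p\<and>p\<le>d\<and>c\<le>q\<and>q\<le>d"
  and h3: "a\<le>c \<and> d\<le>b \<Longrightarrow> a\<noteq>c \<or> b\<noteq>d \<Longrightarrow> \<not>(c\<le>a\<and>a\<le>d) \<and> \<not>(c\<le>b \<and> b\<le>d) \<and> \<not>(c\<le>p\<and>p\<le>d) \<and> \<not>(c\<le>q\<and>q\<le>d)"
  shows "(c\<le>p\<and>p\<le>d \<longleftrightarrow> c\<le>a\<and>a\<le>d) \<and> (c\<le>q\<and>q\<le>d \<longleftrightarrow> c\<le>b\<and>b\<le>d)"
proof (cases "c\<le>a \<and> b\<le>d")
  case True thus ?thesis using h2 assms(1-5) by linarith
next
  case nF: False
  show ?thesis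
  proof (cases "a\<le>c \<and> d\<le>b")
    case True
    show ?thesis
    proof (cases "a = c \<and> b = d")
      case True thus ?thesis using nF by linarith
    next
      case False
      then have "a\<noteq>c \<or> b\<noteq>d" by blast
      thus ?thesis using h3 \<open>a\<le>c \<and> d\<le>b\<close> by blast
    qed
  next
    case nB: False
    show ?thesis
    proof (cases "c \<le> b \<and> a \<le> d")
      case False thus ?thesis using assms(1-5) by linarith
    next
      case True
      have x: "(c\<le>p\<and>p\<le>d) \<noteq> (c\<le>q\<and>q\<le>d)" using h1 nF nB True by blast
      show ?thesis
      proof (cases "c \<le> a")
        case True
        then have "d < b" using nF by linarith
        then show ?thesis using x True assms(1-5) by linarith
      next
        case False
        then show ?thesis using x nB assms(1-5) by linarith
      qed
    qed
  qed
qed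

lemma posit:
  fixes a b c d p q :: nat
  assumes o: "a < b" "c < d" "a \<le> p" "p < q" "q \<le> b"
  and h1: "\<not> {a..b} \<subseteq> {c..d} \<Longrightarrow> \<not> {c..d} \<subseteq> {a..b} \<Longrightarrow> {a..b} \<inter> {c..d} \<noteq> {} \<Longrightarrow> (p \<in> {c..d}) \<noteq> (q \<in> {c..d})"
  and h2: "{a..b} \<subseteq> {c..d} \<Longrightarrow> p \<in> {c..d} \<and> q \<in> {c..d}"
  and h3: "{c..d} \<subseteq> {a..b} \<Longrightarrow> {c..d} \<noteq> {a..b} \<Longrightarrow> a \<notin> {c..d} \<and> b \<notin> {c..d} \<and> p \<notin> {c..d} \<and> q \<notin> {c..d}"
  shows "(p \<in> {c..d} \<longleftrightarrow> a \<in> {c..d}) \<and> (q \<in> {c..d} \<longleftrightarrow> b \<in> {c..d})"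
proof -
  have s1: "{a..b} \<subseteq> {c..d} \<longleftrightarrow> c\<le>a \<and> b\<le>d" using o(1) by (simp add: atLeastatMost_subset_iff)
  have s2: "{c..d} \<subseteq> {a..b} \<longleftrightarrow> a\<le>c \<and> d\<le>b" using o(2) by (simp add: atLeastatMost_subset_iff)
  have s3: "{a..b} \<inter> {c..d} \<noteq> {} \<longleftrightarrow> c \<le> b \<and> a \<le> d"
  proof
    assume "{a..b} \<inter> {c..d} \<noteq> {}" then obtain x where "x \<in> {a..b}" "x \<in> {c..d}" by blast
    then show "c \<le> b \<and> a \<le> d" by simp
  next
    assume "c \<le> b \<and> a \<le> d" then have "max a c \<in> {a..b} \<inter> {c..d}" using o(1,2) by simp
    then show "{a..b} \<inter> {c..d} \<noteq> {}" by blast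
  qed
  have s4: "{c..d} = {a..b} \<longleftrightarrow> a = c \<and> b = d" using o(1,2) s1 s2 by (metis order_antisym subset_refl)
  have m: "\<And>x. x \<in> {c..d} \<longleftrightarrow> c \<le> x \<and> x \<le> d" by simp
  show ?thesis unfolding m
  proof (rule posit_ar[OF o])
    show "(c\<le>p\<and>p\<le>d) \<noteq> (c\<le>q\<and>q\<le>d)" if "\<not>(c\<le>a \<and> b\<le>d)" "\<not>(a\<le>c \<and> d\<le>b)" "c \<le> b \<and> a \<le> d"
      using h1 that s1 s2 s3 m by blast
    show "c\<le>p\<and>p\<le>d\<and>c\<le>q\<and>q\<le>d" if "c\<le>a \<and> b\<le>d" using h2 that s1 m by blast
    show "\<not>(c\<le>a\<and>a\<le>d) \<and> \<not>(c\<le>b \<and> b\<le>d) \<and> \<not>(c\<le>p\<and>p\<le>d) \<and> \<not>(c\<le>q\<and>q\<le>d)"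
      if "a\<le>c \<and> d\<le>b" "a\<noteq>c \<or> b\<noteq>d" using h3 that s2 s4 m by blast
  qed
qed

lemma key:
  assumes sI: "sharp N I" and sJ: "sharp N' J" and iso: "hyp_iso \<psi> {1..N} I {1..N'} J" and FI: "F \<in> I"
  shows "\<exists>P Q. P \<in> F \<and> Q \<in> F \<and> \<psi> ` {P,Q} = extremes (\<psi>`F) \<and>
     (\<forall>B\<in>I. (P\<in>B \<longleftrightarrow> Min F \<in> B) \<and> (Q\<in>B \<longleftrightarrow> Max F\<in>B))"
proof -
  let ?V = "{1..N::nat}"
  have inj: "inj_on \<psi> ?V" and JI: "J = (\<lambda>A. \<psi>`A) ` I" using iso unfolding hyp_iso_def bij_betw_def by auto
  have sub: "\<And>A. A \<in> I \<Longrightarrow> A \<subseteq> ?V" using sharp_ext_sub[OF sI] by blast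
  define G where "G = \<psi> ` F"
  have GJ: "G \<in> J" using JI FI G_def by blast
  define a' where "a' = Min G"
  define b' where "b' = Max G"
  have a'G: "a' \<in> G" and b'G: "b' \<in> G" and ab': "a' < b'"
    using sharp_ext_sub[OF sJ GJ] a'_def b'_def by auto
  obtain p where p: "p \<in> F" "\<psi> p = a'" using a'G G_def by auto
  obtain q where q: "q \<in> F" "\<psi> q = b'" using b'G G_def by auto
  have pq: "p \<noteq> q" using p q ab' by auto
  obtain a b where F: "a < b" "F = {a..b}" using sharp_int[OF sI FI] by blast
  have memB: "\<And>B x. B \<in> I \<Longrightarrow> x \<in> F \<Longrightarrow> \<psi> x \<in> \<psi> ` B \<longleftrightarrow> x \<in> B"
    using inj sub FI by (meson inj_on_image_mem_iff subsetD)
  have subB: "\<And>B. B \<in> I \<Longrightarrow> \<psi> ` F \<subseteq> \<psi> ` B \<longleftrightarrow> F \<subseteq> B"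
    using inj sub FI memB by auto (meson inj_on_image_mem_iff subsetD)
  have subB2: "\<And>B. B \<in> I \<Longrightarrow> \<psi> ` B \<subseteq> \<psi> ` F \<longleftrightarrow> B \<subseteq> F"
    using inj sub FI by auto (meson inj_on_image_mem_iff subsetD)
  have eqB: "\<And>B. B \<in> I \<Longrightarrow> \<psi> ` B = \<psi> ` F \<longleftrightarrow> B = F"
    using inj sub FI by (meson inj_on_image_eq_iff)
  have intB: "\<And>B. B \<in> I \<Longrightarrow> \<psi> ` F \<inter> \<psi> ` B = {} \<longleftrightarrow> F \<inter> B = {}"
    using inj sub FI by (metis image_empty image_is_empty inj_on_image_Int)
  have extG: "a' \<in> extremes G" "b' \<in> extremes G" using a'_def b'_def by (auto simp: extremes_def)
  have H: "(u \<in> B \<longleftrightarrow> a \<in> B) \<and> (v \<in> B \<longleftrightarrow> b \<in> B)"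
    if BI: "B \<in> I" and ple: "u < v" and uF: "u \<in> F" and vF: "v \<in> F" and uv: "\<psi> ` {u,v} = {a',b'}" for B u v
  proof -
    obtain c d where B: "c < d" "B = {c..d}" using sharp_int[OF sI BI] by blast
    have BJ: "\<psi> ` B \<in> J" using JI BI by blast
    have uvm: "(u \<in> B \<longleftrightarrow> \<psi> u \<in> \<psi> ` B)" "(v \<in> B \<longleftrightarrow> \<psi> v \<in> \<psi> ` B)" using memB BI uF vF by auto
    have uv2: "(\<psi> u = a' \<and> \<psi> v = b') \<or> (\<psi> u = b' \<and> \<psi> v = a')" using uv ab' by (auto simp: doubleton_eq_iff)
    have abF: "a \<in> extremes F" "b \<in> extremes F" using F by (auto simp: extremes_def)
    have "(u \<in> {c..d} \<longleftrightarrow> a \<in> {c..d}) \<and> (v \<in> {c..d} \<longleftrightarrow> b \<in> {c..d})"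
    proof (rule posit)
      show "a < b" "c < d" by fact+
      show "a \<le> u" "u < v" "v \<le> b" using uF vF ple F by auto
      assume c1: "\<not> {a..b} \<subseteq> {c..d}" "\<not> {c..d} \<subseteq> {a..b}" "{a..b} \<inter> {c..d} \<noteq> {}"
      have "\<not> G \<subseteq> \<psi> ` B" "\<not> \<psi> ` B \<subseteq> G" "G \<inter> \<psi> ` B \<noteq> {}"
        using c1 F B G_def subB subB2 intB BI by auto
      from cross[OF sJ GJ BJ this] have "(a' \<in> \<psi> ` B) \<noteq> (b' \<in> \<psi> ` B)" using a'_def b'_def by simp
      then show "(u \<in> {c..d}) \<noteq> (v \<in> {c..d})" using uvm uv2 B by auto
    next
      assume c2: "{a..b} \<subseteq> {c..d}"
      then have "G \<subseteq> \<psi> ` B" using F B G_def subB BI by auto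
      then show "u \<in> {c..d} \<and> v \<in> {c..d}" using uvm uv2 B a'G b'G by auto
    next
      assume c3: "{c..d} \<subseteq> {a..b}" "{c..d} \<noteq> {a..b}"
      then have "\<psi> ` B \<subseteq> G" "\<psi> ` B \<noteq> G" using F B G_def subB2 eqB BI by auto
      then have "a' \<notin> \<psi> ` B" "b' \<notin> \<psi> ` B" using sharp_nested[OF sJ GJ BJ] extG by auto
      moreover have "B \<subseteq> F" "B \<noteq> F" using c3 F B by auto
      then have "a \<notin> B" "b \<notin> B" using sharp_nested[OF sI FI BI] abF by blast+
      ultimately show "a \<notin> {c..d} \<and> b \<notin> {c..d} \<and> u \<notin> {c..d} \<and> v \<notin> {c..d}"
        using uvm uv2 B by auto
    qed
    then show ?thesis using B by simp
  qed
  have MM: "Min F = a" "Max F = b" using F by auto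
  have exG: "extremes G = {a', b'}" using a'_def b'_def by (simp add: extremes_def)
  show ?thesis
  proof (cases "p < q")
    case True
    have "\<psi> ` {p,q} = {a',b'}" using p q by auto
    then show ?thesis using H[OF _ True p(1) q(1)] p q MM exG G_def by (intro exI[of _ p] exI[of _ q]) auto
  next
    case False
    then have qp: "q < p" using pq by auto
    have "\<psi> ` {q,p} = {a',b'}" using p q by auto
    then show ?thesis using H[OF _ qp q(1) p(1)] p q MM exG G_def by (intro exI[of _ q] exI[of _ p]) auto
  qed
qed

theorem lemma10:
  fixes N N' :: nat and I J :: "nat set set" and \<psi> :: "nat \<Rightarrow> nat"
  assumes "sharp N I" and "sharp N' J"
    and "\<exists>f. hyp_iso f {1..N} I {1..N'} J"
    and "hyp_iso \<psi> {1..N} I {1..N'} J"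
  shows "\<exists>\<psi>'. hyp_iso \<psi>' {1..N} I {1..N'} J \<and>
           (\<forall>A\<in>I. \<psi>' ` A = \<psi> ` A) \<and>
           (\<forall>A\<in>I. \<psi>' ` extremes A = extremes (\<psi> ` A))"
proof -
  note sI = assms(1) and sJ = assms(2) and iso = assms(4)
  let ?V = "{1..N::nat}" and ?V' = "{1..N'::nat}"
  have inj: "inj_on \<psi> ?V" and JI: "J = (\<lambda>A. \<psi>`A) ` I" and bij: "bij_betw \<psi> ?V ?V'"
    using iso unfolding hyp_iso_def bij_betw_def by auto
  have NN: "N' = N" using bij_betw_same_card[OF bij] by simp
  have sub: "\<And>A. A \<in> I \<Longrightarrow> A \<subseteq> ?V" using sharp_ext_sub[OF sI] by blast
  define R where "R F P Q \<longleftrightarrow> P \<in> F \<and> Q \<in> F \<and> \<psi> ` {P,Q} = extremes (\<psi>`F) \<and>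
     (\<forall>B\<in>I. (P\<in>B \<longleftrightarrow> Min F \<in> B) \<and> (Q\<in>B \<longleftrightarrow> Max F\<in>B))" for F P Q
  have "\<forall>F\<in>I. \<exists>x. R F (fst x) (snd x)"
  proof
    fix F assume "F \<in> I"
    from key[OF sI sJ iso this] obtain P Q where "R F P Q" unfolding R_def by blast
    then show "\<exists>x. R F (fst x) (snd x)" by (intro exI[of _ "(P,Q)"]) simp
  qed
  from bchoice[OF this] obtain g where g: "\<forall>F\<in>I. R F (fst (g F)) (snd (g F))" by blast
  define lo where "lo F = fst (g F)" for F
  define hi where "hi F = snd (g F)" for F
  have LH: "lo F \<in> F \<and> hi F \<in> F \<and> \<psi> ` {lo F, hi F} = extremes (\<psi>`F) \<and>
     (\<forall>B\<in>I. (lo F\<in>B \<longleftrightarrow> Min F \<in> B) \<and> (hi F\<in>B \<longleftrightarrow> Max F\<in>B))" if "F \<in> I" for F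
    using g that unfolding lo_def hi_def R_def by blast
  define ef where "ef x = (THE F. F \<in> I \<and> x \<in> extremes F)" for x
  have efF: "ef x = F" if "F \<in> I" "x \<in> extremes F" for x F
    unfolding ef_def
  proof (rule the_equality)
    show "F \<in> I \<and> x \<in> extremes F" using that by blast
    show "G = F" if "G \<in> I \<and> x \<in> extremes G" for G
      using sharp_unique[OF sI] that \<open>F \<in> I\<close> \<open>x \<in> extremes F\<close> by blast
  qed
  have cov: "(\<Union>A\<in>I. extremes A) = ?V" by (rule sharp_cover[OF sI])
  have efV: "ef x \<in> I \<and> x \<in> extremes (ef x)" if "x \<in> ?V" for x
  proof -
    from that cov obtain F where "F \<in> I" "x \<in> extremes F" by blast
    with efF show ?thesis by auto
  qed
  define \<sigma> where "\<sigma> x = (if x = Min (ef x) then lo (ef x) else hi (ef x))" for x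
  have sig_ext: "\<sigma> ` extremes F = {lo F, hi F}" if "F \<in> I" for F
  proof -
    have "Min F \<noteq> Max F" using sharp_ext_sub[OF sI that] by simp
    moreover have "ef (Min F) = F" "ef (Max F) = F" using efF that by (auto simp: extremes_def)
    ultimately show ?thesis unfolding \<sigma>_def extremes_def by auto
  qed
  have sigV: "\<sigma> x \<in> ?V \<and> (\<forall>B\<in>I. \<sigma> x \<in> B \<longleftrightarrow> x \<in> B)" if "x \<in> ?V" for x
  proof -
    have F: "ef x \<in> I" "x \<in> extremes (ef x)" using efV that by auto
    then have "x = Min (ef x) \<or> x = Max (ef x)" by (auto simp: extremes_def)
    then show ?thesis using LH[OF F(1)] sub[OF F(1)] unfolding \<sigma>_def by auto
  qed
  define \<psi>' where "\<psi>' = \<psi> \<circ> \<sigma>"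
  have ext': "\<psi>' ` extremes A = extremes (\<psi> ` A)" if "A \<in> I" for A
    unfolding \<psi>'_def image_comp[symmetric] sig_ext[OF that] using LH[OF that] by simp
  have img: "\<psi>' ` ?V = ?V'"
  proof -
    have "\<psi>' ` ?V = (\<Union>A\<in>I. \<psi>' ` extremes A)" using cov by blast
    also have "\<dots> = (\<Union>A\<in>I. extremes (\<psi> ` A))" using ext' by simp
    also have "\<dots> = (\<Union>G\<in>J. extremes G)" using JI by auto
    also have "\<dots> = ?V'" by (rule sharp_cover[OF sJ])
    finally show ?thesis .
  qed
  have inj': "inj_on \<psi>' ?V"
    by (rule eq_card_imp_inj_on) (use img NN in auto)
  have bij': "bij_betw \<psi>' ?V ?V'" using inj' img unfolding bij_betw_def by blast
  have same: "\<psi>' ` A = \<psi> ` A" if AI: "A \<in> I" for A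
  proof
    show "\<psi>' ` A \<subseteq> \<psi> ` A" using sigV sub[OF AI] AI unfolding \<psi>'_def by auto
  next
    show "\<psi> ` A \<subseteq> \<psi>' ` A"
    proof
      fix y assume "y \<in> \<psi> ` A"
      then obtain x where x: "x \<in> A" "y = \<psi> x" by blast
      have xV: "x \<in> ?V" using x sub[OF AI] by blast
      then have "y \<in> ?V'" using bij x unfolding bij_betw_def by auto
      then obtain z where z: "z \<in> ?V" "\<psi>' z = y" using img by (metis imageE)
      have sz: "\<sigma> z \<in> ?V" using sigV[OF z(1)] by blast
      have "\<psi> (\<sigma> z) = \<psi> x" using z(2) x(2) unfolding \<psi>'_def by simp
      then have "\<sigma> z = x" using inj_onD[OF inj _ sz xV] by blast
      then have "z \<in> A" using sigV[OF z(1)] AI x(1) by blast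
      then show "y \<in> \<psi>' ` A" using z by blast
    qed
  qed
  have "(\<lambda>A. \<psi>' ` A) ` I = J" using JI same by auto
  then have "hyp_iso \<psi>' ?V I ?V' J" using bij' unfolding hyp_iso_def by blast
  then show ?thesis using same ext' by blast
qed

end
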